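(* Let $G\in\mathcal{WR}_b(A,B\curvearrowright I)$ with quotient map $\varepsilon\colon G\to B$, section $\varsigma$ and cocycle $\alpha$, and let $C>0$ with $|\mathrm{supp}(\alpha(x,y))|\le C$ for all $x,y\in B$. Let $\pi\colon B\to\mathcal O(\ell^2(I))$ be the orthogonal (permutation) representation induced by $B\curvearrowright I$. Then there is a map $\mathfrak q\colon G\to\ell^2(I)$ such that (1) for all $x,y\in G$, $\sup_{z\in G}\|\mathfrak q(xzy)-\pi_{\varepsilon(x)}(\mathfrak q(z))\|_2<\infty$; and (2) for all $x\in A^{(I)}$, $\|\mathfrak q(x)\|_2^2=|\mathrm{supp}(x)|$.
   Context: $G\in\mathcal{WR}(A,B\curvearrowright I)$ means there is a short exact sequence $1\to A^{(I)}:=\bigoplus_{i\in I}A_i\to G\xrightarrow{\varepsilon}B\to1$ with $A_i\cong A$ and $gA_ig^{-1}=A_{\varepsilon(g)i}$ for all $g\in G,i\in I$. $G\in\mathcal{WR}_b(A,B\curvearrowright I)$ means moreover there is a map $\varsigma\colon B\to G$ with $\varepsilon\circ\varsigma=\mathrm{id}_B$ such that the cocycle $\alpha(x,y)=\varsigma(x)\varsigma(y)\varsigma(xy)^{-1}\in A^{(I)}$ has uniformly bounded support. For $c\in A^{(I)}$, $\mathrm{supp}(c)=\{i\in I: c(i)\neq1\}$. $\ell^2(I)$ is the real Hilbert space of square-summable real functions on $I$. *)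

theory Defs
  imports "HOL-Analysis.Analysis" "HOL-Algebra.Product_Groups" "HOL-Algebra.Group_Action"
begin

text \<open>The restricted direct sum A^(I) = (finitely supported functions I -> A), as a group.\<close>
abbreviation dsum :: "'i set \<Rightarrow> ('a, 'c) monoid_scheme \<Rightarrow> ('i \<Rightarrow> 'a) monoid" where
  "dsum I A \<equiv> sum_group I (\<lambda>_. A)"

definition supp_ds :: "'i set \<Rightarrow> ('a, 'c) monoid_scheme \<Rightarrow> ('i \<Rightarrow> 'a) \<Rightarrow> 'i set" where
  "supp_ds I A c = {i \<in> I. c i \<noteq> \<one>\<^bsub>A\<^esub>}"

definition factor_ds :: "'i set \<Rightarrow> ('a, 'c) monoid_scheme \<Rightarrow> 'i \<Rightarrow> ('i \<Rightarrow> 'a) set" where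
  "factor_ds I A i = {c \<in> carrier (dsum I A). \<forall>j\<in>I. j \<noteq> i \<longrightarrow> c j = \<one>\<^bsub>A\<^esub>}"

text \<open>G \<in> WR(A, B acting on I): G is an extension of B by A^(I) (embedded via iota),
  the quotient map is eps, B acts on I via phi, and conjugation permutes the factors.\<close>
definition WR ::
  "('g, 'gc) monoid_scheme \<Rightarrow> ('a, 'ac) monoid_scheme \<Rightarrow> ('b, 'bc) monoid_scheme \<Rightarrow> 'i set
   \<Rightarrow> ('b \<Rightarrow> 'i \<Rightarrow> 'i) \<Rightarrow> (('i \<Rightarrow> 'a) \<Rightarrow> 'g) \<Rightarrow> ('g \<Rightarrow> 'b) \<Rightarrow> bool" where
  "WR G A B I phi iota eps \<longleftrightarrow>
     group G \<and> group A \<and> group B \<and> group_action B I phi \<and>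
     iota \<in> hom (dsum I A) G \<and> inj_on iota (carrier (dsum I A)) \<and>
     eps \<in> hom G B \<and> eps ` carrier G = carrier B \<and>
     iota ` carrier (dsum I A) = kernel G B eps \<and>
     (\<forall>g\<in>carrier G. \<forall>i\<in>I.
        (\<lambda>h. g \<otimes>\<^bsub>G\<^esub> h \<otimes>\<^bsub>G\<^esub> inv\<^bsub>G\<^esub> g) ` (iota ` factor_ds I A i)
          = iota ` factor_ds I A (phi (eps g) i))"

definition cocycle ::
  "('g, 'gc) monoid_scheme \<Rightarrow> ('b, 'bc) monoid_scheme \<Rightarrow> ('b \<Rightarrow> 'g) \<Rightarrow> 'b \<Rightarrow> 'b \<Rightarrow> 'g" where
  "cocycle G B sig x y = sig x \<otimes>\<^bsub>G\<^esub> sig y \<otimes>\<^bsub>G\<^esub> inv\<^bsub>G\<^esub> (sig (x \<otimes>\<^bsub>B\<^esub> y))"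

definition l2 :: "'i set \<Rightarrow> ('i \<Rightarrow> real) set" where
  "l2 I = {f. (\<forall>i. i \<notin> I \<longrightarrow> f i = 0) \<and> (\<lambda>i. (f i)\<^sup>2) summable_on I}"

definition l2norm :: "'i set \<Rightarrow> ('i \<Rightarrow> real) \<Rightarrow> real" where
  "l2norm I f = sqrt (infsum (\<lambda>i. (f i)\<^sup>2) I)"

text \<open>Permutation representation: (pi_b f)(i) = f(b^{-1} i), so pi_b delta_j = delta_{b j}.\<close>
definition perm_rep ::
  "('b, 'bc) monoid_scheme \<Rightarrow> 'i set \<Rightarrow> ('b \<Rightarrow> 'i \<Rightarrow> 'i) \<Rightarrow> 'b \<Rightarrow> ('i \<Rightarrow> real) \<Rightarrow> ('i \<Rightarrow> real)" where
  "perm_rep B I phi b f = (\<lambda>i. if i \<in> I then f (phi (inv\<^bsub>B\<^esub> b) i) else 0)"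

end

theory Submission
  imports Defs
begin

lemma grp_cancel1: "group G \<Longrightarrow> x \<in> carrier G \<Longrightarrow> y \<in> carrier G \<Longrightarrow> x \<otimes>\<^bsub>G\<^esub> (inv\<^bsub>G\<^esub> x \<otimes>\<^bsub>G\<^esub> y) = y"
  by (metis group.inv_closed group.r_inv monoid.l_one monoid.m_assoc group.is_monoid)
lemma grp_cancel2: "group G \<Longrightarrow> x \<in> carrier G \<Longrightarrow> y \<in> carrier G \<Longrightarrow> inv\<^bsub>G\<^esub> x \<otimes>\<^bsub>G\<^esub> (x \<otimes>\<^bsub>G\<^esub> y) = y"
  by (metis group.inv_closed group.l_inv monoid.l_one monoid.m_assoc group.is_monoid)

lemma big_identity:
  assumes G: "group G" and c: "x \<in> carrier G" "z \<in> carrier G" "y \<in> carrier G" "a \<in> carrier G"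
    "b \<in> carrier G" "c \<in> carrier G" "u \<in> carrier G" "v \<in> carrier G"
  shows "(x \<otimes>\<^bsub>G\<^esub> (z \<otimes>\<^bsub>G\<^esub> inv\<^bsub>G\<^esub> b) \<otimes>\<^bsub>G\<^esub> inv\<^bsub>G\<^esub> x) \<otimes>\<^bsub>G\<^esub>
     ((x \<otimes>\<^bsub>G\<^esub> inv\<^bsub>G\<^esub> a) \<otimes>\<^bsub>G\<^esub> ((a \<otimes>\<^bsub>G\<^esub> b) \<otimes>\<^bsub>G\<^esub> (y \<otimes>\<^bsub>G\<^esub> inv\<^bsub>G\<^esub> c) \<otimes>\<^bsub>G\<^esub> inv\<^bsub>G\<^esub> (a \<otimes>\<^bsub>G\<^esub> b))
      \<otimes>\<^bsub>G\<^esub> (a \<otimes>\<^bsub>G\<^esub> b \<otimes>\<^bsub>G\<^esub> inv\<^bsub>G\<^esub> u) \<otimes>\<^bsub>G\<^esub> (u \<otimes>\<^bsub>G\<^esub> c \<otimes>\<^bsub>G\<^esub> inv\<^bsub>G\<^esub> v))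
   = x \<otimes>\<^bsub>G\<^esub> z \<otimes>\<^bsub>G\<^esub> y \<otimes>\<^bsub>G\<^esub> inv\<^bsub>G\<^esub> v"
  using c by (simp add: group.inv_mult_group[OF G] monoid.m_assoc[OF group.is_monoid[OF G]]
     grp_cancel1[OF G] grp_cancel2[OF G] group.inv_closed[OF G] monoid.m_closed[OF group.is_monoid[OF G]])


lemma infsum_ind:
  fixes f :: "'i \<Rightarrow> real"
  assumes "finite U" "U \<subseteq> I" "\<And>i. (f i)\<^sup>2 = (if i \<in> U then 1 else 0)"
  shows "infsum (\<lambda>i. (f i)\<^sup>2) I = real (card U)" and "(\<lambda>i. (f i)\<^sup>2) summable_on I"
proof -
  have "infsum (\<lambda>i. (f i)\<^sup>2) I = infsum (\<lambda>i. (f i)\<^sup>2) U"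
    by (rule infsum_cong_neutral) (use assms in auto)
  also have "\<dots> = (\<Sum>i\<in>U. 1)" using assms by simp
  finally show "infsum (\<lambda>i. (f i)\<^sup>2) I = real (card U)" by simp
  have "(\<lambda>i. (f i)\<^sup>2) summable_on I \<longleftrightarrow> (\<lambda>i. (f i)\<^sup>2) summable_on U"
    by (rule summable_on_cong_neutral) (use assms in auto)
  then show "(\<lambda>i. (f i)\<^sup>2) summable_on I" using assms by simp
qed

lemma l2_ind:
  assumes "finite S" "S \<subseteq> I"
  shows "(\<lambda>i. if i \<in> S then 1 else 0 :: real) \<in> l2 I"
    and "l2norm I (\<lambda>i. if i \<in> S then 1 else 0 :: real) = sqrt (real (card S))"
proof -
  have h: "\<And>i. ((\<lambda>i. if i \<in> S then 1 else 0 :: real) i)\<^sup>2 = (if i \<in> S then 1 else 0)" by simp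
  show "(\<lambda>i. if i \<in> S then 1 else 0 :: real) \<in> l2 I"
    unfolding l2_def using infsum_ind(2)[OF assms h] assms by auto
  show "l2norm I (\<lambda>i. if i \<in> S then 1 else 0 :: real) = sqrt (real (card S))"
    unfolding l2norm_def using infsum_ind(1)[OF assms h] by simp
qed

lemma l2norm_diff:
  assumes "finite S" "finite T" "S \<subseteq> I" "T \<subseteq> I"
  shows "l2norm I (\<lambda>i. (if i \<in> S then 1 else 0) - (if i \<in> T then 1 else 0 :: real))
     = sqrt (real (card ((S - T) \<union> (T - S))))"
proof -
  have h: "\<And>i. ((\<lambda>i. (if i \<in> S then 1 else 0) - (if i \<in> T then 1 else 0 :: real)) i)\<^sup>2
     = (if i \<in> (S - T) \<union> (T - S) then 1 else 0)" by auto
  show ?thesis unfolding l2norm_def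
    using infsum_ind(1)[OF _ _ h] assms by auto
qed

locale wrc =
  fixes G :: "('g, 'gc) monoid_scheme" and A :: "('a, 'ac) monoid_scheme"
    and B :: "('b, 'bc) monoid_scheme" and I :: "'i set"
    and phi :: "'b \<Rightarrow> 'i \<Rightarrow> 'i" and iota :: "('i \<Rightarrow> 'a) \<Rightarrow> 'g" and eps :: "'g \<Rightarrow> 'b"
  assumes wr: "WR G A B I phi iota eps"
begin

lemma grpG: "group G" and grpA: "group A" and grpB: "group B" and act: "group_action B I phi"
  and iota_hom: "iota \<in> hom (dsum I A) G" and iota_inj: "inj_on iota (carrier (dsum I A))"
  and eps_hom: "eps \<in> hom G B" and eps_surj: "eps ` carrier G = carrier B"
  and kern: "iota ` carrier (dsum I A) = kernel G B eps"
  and fact: "\<And>g i. g\<in>carrier G \<Longrightarrow> i\<in>I \<Longrightarrow>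
        (\<lambda>h. g \<otimes>\<^bsub>G\<^esub> h \<otimes>\<^bsub>G\<^esub> inv\<^bsub>G\<^esub> g) ` (iota ` factor_ds I A i)
          = iota ` factor_ds I A (phi (eps g) i)"
  using wr unfolding WR_def by auto

lemma grpD: "group (dsum I A)" using grpA by simp

sublocale Gp: group G by (rule grpG)
sublocale Ap: group A by (rule grpA)
sublocale Bp: group B by (rule grpB)
sublocale Dp: group "dsum I A" by (rule grpD)
sublocale ac: group_action B I phi by (rule act)
sublocale ih: group_hom "dsum I A" G iota by unfold_locales (rule iota_hom)
sublocale eh: group_hom G B eps by unfold_locales (rule eps_hom)

lemma carD: "carrier (dsum I A) = {x \<in> (\<Pi>\<^sub>E i\<in>I. carrier A). finite {i \<in> I. x i \<noteq> \<one>\<^bsub>A\<^esub>}}"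
  by (rule carrier_sum_group) (simp add: grpA)

lemma supp_fin: "c \<in> carrier (dsum I A) \<Longrightarrow> finite (supp_ds I A c)"
  using carD unfolding supp_ds_def by auto

lemma supp_sub: "supp_ds I A c \<subseteq> I"
  unfolding supp_ds_def by auto

lemma supp_mult1: "c1 \<in> carrier (dsum I A) \<Longrightarrow> c2 \<in> carrier (dsum I A) \<Longrightarrow>
   supp_ds I A (c1 \<otimes>\<^bsub>dsum I A\<^esub> c2) \<subseteq> supp_ds I A c1 \<union> supp_ds I A c2"
  unfolding supp_ds_def by auto

lemma supp_mult2: "c1 \<in> carrier (dsum I A) \<Longrightarrow> c2 \<in> carrier (dsum I A) \<Longrightarrow>
   (supp_ds I A (c1 \<otimes>\<^bsub>dsum I A\<^esub> c2) - supp_ds I A c1) \<union> (supp_ds I A c1 - supp_ds I A (c1 \<otimes>\<^bsub>dsum I A\<^esub> c2))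
     \<subseteq> supp_ds I A c2"
  unfolding supp_ds_def carD by (auto simp: PiE_iff)

lemma card_supp_mult: "c1 \<in> carrier (dsum I A) \<Longrightarrow> c2 \<in> carrier (dsum I A) \<Longrightarrow>
   card (supp_ds I A (c1 \<otimes>\<^bsub>dsum I A\<^esub> c2)) \<le> card (supp_ds I A c1) + card (supp_ds I A c2)"
proof -
  assume a: "c1 \<in> carrier (dsum I A)" "c2 \<in> carrier (dsum I A)"
  have "card (supp_ds I A (c1 \<otimes>\<^bsub>dsum I A\<^esub> c2)) \<le> card (supp_ds I A c1 \<union> supp_ds I A c2)"
    by (rule card_mono) (use a supp_fin supp_mult1 in auto)
  also have "\<dots> \<le> card (supp_ds I A c1) + card (supp_ds I A c2)" by (rule card_Un_le)
  finally show ?thesis .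
qed

definition cof :: "'g \<Rightarrow> ('i \<Rightarrow> 'a)" where "cof g = the_inv_into (carrier (dsum I A)) iota g"

lemma cof_iota: "c \<in> carrier (dsum I A) \<Longrightarrow> cof (iota c) = c"
  unfolding cof_def by (rule the_inv_into_f_f[OF iota_inj])

lemma kern_elem: "g \<in> carrier G \<Longrightarrow> eps g = \<one>\<^bsub>B\<^esub> \<Longrightarrow> cof g \<in> carrier (dsum I A) \<and> iota (cof g) = g"
proof -
  assume "g \<in> carrier G" "eps g = \<one>\<^bsub>B\<^esub>"
  then have "g \<in> iota ` carrier (dsum I A)" using kern unfolding kernel_def by auto
  then show ?thesis using cof_iota by auto
qed

lemma one_D_eq: "c \<in> carrier (dsum I A) \<Longrightarrow> (\<forall>j\<in>I. c j = \<one>\<^bsub>A\<^esub>) \<Longrightarrow> c = \<one>\<^bsub>dsum I A\<^esub>"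
  unfolding carD by (auto simp: PiE_iff extensional_def)


lemma phi_I: "b \<in> carrier B \<Longrightarrow> i \<in> I \<Longrightarrow> phi b i \<in> I"
  using ac.element_image by blast

lemma phi_inj: "b \<in> carrier B \<Longrightarrow> inj_on (phi b) I"
  by (rule ac.inj_prop)

lemma phi_one: "i \<in> I \<Longrightarrow> phi \<one>\<^bsub>B\<^esub> i = i"
  by (metis ac.id_eq_one restrict_apply')

lemma perm_rep_ind:
  assumes b: "b \<in> carrier B" and S: "S \<subseteq> I"
  shows "perm_rep B I phi b (\<lambda>i. if i \<in> S then 1 else 0) = (\<lambda>i. if i \<in> phi b ` S then 1 else 0)"
proof
  fix i
  show "perm_rep B I phi b (\<lambda>i. if i \<in> S then 1 else 0) i = (if i \<in> phi b ` S then 1 else 0)"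
  proof (cases "i \<in> I")
    case True
    have "phi (inv\<^bsub>B\<^esub> b) i \<in> S \<longleftrightarrow> i \<in> phi b ` S"
    proof
      assume "phi (inv\<^bsub>B\<^esub> b) i \<in> S"
      moreover have "phi b (phi (inv\<^bsub>B\<^esub> b) i) = i"
        using ac.composition_rule[OF True b Bp.inv_closed[OF b]] b phi_one True by simp
      ultimately show "i \<in> phi b ` S" by (metis image_eqI)
    next
      assume "i \<in> phi b ` S"
      then obtain s where s: "s \<in> S" "i = phi b s" by auto
      have "phi (inv\<^bsub>B\<^esub> b) (phi b s) = s"
        using ac.composition_rule[OF _ Bp.inv_closed[OF b] b, of s] b phi_one s S by auto
      then show "phi (inv\<^bsub>B\<^esub> b) i \<in> S" using s by simp
    qed
    then show ?thesis using True unfolding perm_rep_def by simp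
  next
    case False
    then have "i \<notin> phi b ` S" using phi_I[OF b] S by auto
    then show ?thesis using False unfolding perm_rep_def by simp
  qed
qed

lemma conj_mult: "g \<in> carrier G \<Longrightarrow> a \<in> carrier G \<Longrightarrow> c \<in> carrier G \<Longrightarrow>
  g \<otimes>\<^bsub>G\<^esub> (a \<otimes>\<^bsub>G\<^esub> c) \<otimes>\<^bsub>G\<^esub> inv\<^bsub>G\<^esub> g
   = (g \<otimes>\<^bsub>G\<^esub> a \<otimes>\<^bsub>G\<^esub> inv\<^bsub>G\<^esub> g) \<otimes>\<^bsub>G\<^esub> (g \<otimes>\<^bsub>G\<^esub> c \<otimes>\<^bsub>G\<^esub> inv\<^bsub>G\<^esub> g)"
  by (simp add: Gp.m_assoc grp_cancel2[OF grpG])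

lemma conj_one: "g \<in> carrier G \<Longrightarrow> a \<in> carrier G \<Longrightarrow> g \<otimes>\<^bsub>G\<^esub> a \<otimes>\<^bsub>G\<^esub> inv\<^bsub>G\<^esub> g = \<one>\<^bsub>G\<^esub> \<Longrightarrow> a = \<one>\<^bsub>G\<^esub>"
proof -
  assume a: "g \<in> carrier G" "a \<in> carrier G" "g \<otimes>\<^bsub>G\<^esub> a \<otimes>\<^bsub>G\<^esub> inv\<^bsub>G\<^esub> g = \<one>\<^bsub>G\<^esub>"
  have "a = inv\<^bsub>G\<^esub> g \<otimes>\<^bsub>G\<^esub> (g \<otimes>\<^bsub>G\<^esub> a \<otimes>\<^bsub>G\<^esub> inv\<^bsub>G\<^esub> g) \<otimes>\<^bsub>G\<^esub> g"
    using a(1,2) by (simp add: Gp.m_assoc grp_cancel2[OF grpG])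
  also have "\<dots> = inv\<^bsub>G\<^esub> g \<otimes>\<^bsub>G\<^esub> \<one>\<^bsub>G\<^esub> \<otimes>\<^bsub>G\<^esub> g" by (simp only: a(3))
  also have "\<dots> = \<one>\<^bsub>G\<^esub>" using a(1) by simp
  finally show ?thesis .
qed

lemma conj_supp_aux:
  assumes g: "g \<in> carrier G" and S: "finite S"
  shows "\<forall>c\<in>carrier (dsum I A). supp_ds I A c = S \<longrightarrow>
     (\<exists>c'\<in>carrier (dsum I A). g \<otimes>\<^bsub>G\<^esub> iota c \<otimes>\<^bsub>G\<^esub> inv\<^bsub>G\<^esub> g = iota c' \<and> supp_ds I A c' = phi (eps g) ` S)"
  using S
proof (induction S rule: finite_induct)
  case empty
  show ?case
  proof (intro ballI impI)
    fix c assume c: "c \<in> carrier (dsum I A)" "supp_ds I A c = {}"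
    then have "c = \<one>\<^bsub>dsum I A\<^esub>" using one_D_eq unfolding supp_ds_def by auto
    then have "iota c = \<one>\<^bsub>G\<^esub>" using ih.hom_one by simp
    then have "g \<otimes>\<^bsub>G\<^esub> iota c \<otimes>\<^bsub>G\<^esub> inv\<^bsub>G\<^esub> g = \<one>\<^bsub>G\<^esub>" using g by simp
    then have "g \<otimes>\<^bsub>G\<^esub> iota c \<otimes>\<^bsub>G\<^esub> inv\<^bsub>G\<^esub> g = iota \<one>\<^bsub>dsum I A\<^esub>" using ih.hom_one by simp
    moreover have "supp_ds I A \<one>\<^bsub>dsum I A\<^esub> = {}" unfolding supp_ds_def by simp
    ultimately show "\<exists>c'\<in>carrier (dsum I A). g \<otimes>\<^bsub>G\<^esub> iota c \<otimes>\<^bsub>G\<^esub> inv\<^bsub>G\<^esub> g = iota c' \<and> supp_ds I A c' = phi (eps g) ` {}"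
      by (metis Dp.one_closed image_empty)
  qed
next
  case (insert i S)
  show ?case
  proof (intro ballI impI)
    fix c assume c: "c \<in> carrier (dsum I A)" "supp_ds I A c = insert i S"
    have iI: "i \<in> I" and ci1: "c i \<noteq> \<one>\<^bsub>A\<^esub>" using c(2) unfolding supp_ds_def by auto
    have cPi: "c \<in> (\<Pi>\<^sub>E i\<in>I. carrier A)" using c(1) carD by auto
    have SI: "S \<subseteq> I" using c(2) supp_sub by blast
    have egB: "eps g \<in> carrier B" using g by simp
    define ci where "ci = (\<lambda>j\<in>I. if j = i then c i else \<one>\<^bsub>A\<^esub>)"
    define cr where "cr = (\<lambda>j\<in>I. if j = i then \<one>\<^bsub>A\<^esub> else c j)"
    have ciD: "ci \<in> carrier (dsum I A)"
    proof -
      have "{j \<in> I. ci j \<noteq> \<one>\<^bsub>A\<^esub>} \<subseteq> {i}" unfolding ci_def by auto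
      then show ?thesis unfolding carD ci_def using cPi iI by (auto simp: PiE_iff intro: finite_subset)
    qed
    have crD: "cr \<in> carrier (dsum I A)"
    proof -
      have fin: "finite {j \<in> I. cr j \<noteq> \<one>\<^bsub>A\<^esub>}"
        by (rule finite_subset[OF _ supp_fin[OF c(1)]]) (auto simp: cr_def supp_ds_def)
      have "cr \<in> (\<Pi>\<^sub>E i\<in>I. carrier A)" using cPi unfolding cr_def by (auto simp: PiE_iff)
      then show ?thesis unfolding carD using fin by blast
    qed
    have csplit: "c = ci \<otimes>\<^bsub>dsum I A\<^esub> cr"
    proof
      fix j show "c j = (ci \<otimes>\<^bsub>dsum I A\<^esub> cr) j"
        using cPi unfolding ci_def cr_def by (auto simp: PiE_iff extensional_def)
    qed
    have suppcr: "supp_ds I A cr = S"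
      using c(2) insert(2) unfolding supp_ds_def cr_def by auto
    obtain cr' where cr': "cr' \<in> carrier (dsum I A)" "g \<otimes>\<^bsub>G\<^esub> iota cr \<otimes>\<^bsub>G\<^esub> inv\<^bsub>G\<^esub> g = iota cr'"
      "supp_ds I A cr' = phi (eps g) ` S"
      using insert(3) crD suppcr by blast
    have "ci \<in> factor_ds I A i" unfolding factor_ds_def using ciD unfolding ci_def by auto
    then have "g \<otimes>\<^bsub>G\<^esub> iota ci \<otimes>\<^bsub>G\<^esub> inv\<^bsub>G\<^esub> g \<in> iota ` factor_ds I A (phi (eps g) i)"
      using fact[OF g iI] by blast
    then obtain d where d: "d \<in> factor_ds I A (phi (eps g) i)" "g \<otimes>\<^bsub>G\<^esub> iota ci \<otimes>\<^bsub>G\<^esub> inv\<^bsub>G\<^esub> g = iota d"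
      by auto
    have dD: "d \<in> carrier (dsum I A)" and d1: "\<And>j. j \<in> I \<Longrightarrow> j \<noteq> phi (eps g) i \<Longrightarrow> d j = \<one>\<^bsub>A\<^esub>"
      using d(1) unfolding factor_ds_def by auto
    have piI: "phi (eps g) i \<in> I" using phi_I[OF egB iI] .
    have dnz: "d (phi (eps g) i) \<noteq> \<one>\<^bsub>A\<^esub>"
    proof
      assume "d (phi (eps g) i) = \<one>\<^bsub>A\<^esub>"
      then have "d = \<one>\<^bsub>dsum I A\<^esub>" using one_D_eq[OF dD] d1 by metis
      then have "g \<otimes>\<^bsub>G\<^esub> iota ci \<otimes>\<^bsub>G\<^esub> inv\<^bsub>G\<^esub> g = \<one>\<^bsub>G\<^esub>" using d(2) ih.hom_one by simp
      then have "iota ci = \<one>\<^bsub>G\<^esub>" using conj_one[OF g] ciD by simp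
      then have "iota ci = iota \<one>\<^bsub>dsum I A\<^esub>" using ih.hom_one by simp
      then have "ci = \<one>\<^bsub>dsum I A\<^esub>" using inj_onD[OF iota_inj _ ciD Dp.one_closed] by blast
      then have "ci i = \<one>\<^bsub>A\<^esub>" using iI by simp
      then show False using ci1 iI unfolding ci_def by simp
    qed
    have notin: "phi (eps g) i \<notin> phi (eps g) ` S"
      using insert(2) phi_inj[OF egB] SI iI by (auto dest: inj_onD)
    have cr'1: "cr' (phi (eps g) i) = \<one>\<^bsub>A\<^esub>"
      using notin cr'(3) piI unfolding supp_ds_def by auto
    have crA: "\<And>j. j \<in> I \<Longrightarrow> cr' j \<in> carrier A" using cr'(1) carD by (auto simp: PiE_iff)
    have dA: "\<And>j. j \<in> I \<Longrightarrow> d j \<in> carrier A" using dD carD by (auto simp: PiE_iff)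
    have "g \<otimes>\<^bsub>G\<^esub> iota c \<otimes>\<^bsub>G\<^esub> inv\<^bsub>G\<^esub> g = iota (d \<otimes>\<^bsub>dsum I A\<^esub> cr')"
    proof -
      have e1: "iota c = iota ci \<otimes>\<^bsub>G\<^esub> iota cr" by (subst csplit) (rule ih.hom_mult[OF ciD crD])
      have e2: "iota d \<otimes>\<^bsub>G\<^esub> iota cr' = iota (d \<otimes>\<^bsub>dsum I A\<^esub> cr')" by (rule ih.hom_mult[OF dD cr'(1), symmetric])
      show ?thesis unfolding e1 conj_mult[OF g ih.hom_closed[OF ciD] ih.hom_closed[OF crD]] d(2) cr'(2) e2 ..
    qed
    moreover have "supp_ds I A (d \<otimes>\<^bsub>dsum I A\<^esub> cr') = phi (eps g) ` insert i S"
    proof -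
      have "\<And>j. j \<in> I \<Longrightarrow> (d j \<otimes>\<^bsub>A\<^esub> cr' j \<noteq> \<one>\<^bsub>A\<^esub>) \<longleftrightarrow> (j = phi (eps g) i \<or> j \<in> phi (eps g) ` S)"
      proof -
        fix j assume j: "j \<in> I"
        show "(d j \<otimes>\<^bsub>A\<^esub> cr' j \<noteq> \<one>\<^bsub>A\<^esub>) \<longleftrightarrow> (j = phi (eps g) i \<or> j \<in> phi (eps g) ` S)"
        proof (cases "j = phi (eps g) i")
          case True
          then show ?thesis using cr'1 dnz dA j by simp
        next
          case False
          then have "d j \<otimes>\<^bsub>A\<^esub> cr' j = cr' j" using d1 j crA by simp
          then show ?thesis using False cr'(3) j unfolding supp_ds_def by auto
        qed
      qed
      then show ?thesis unfolding supp_ds_def using piI phi_I[OF egB] SI by auto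
    qed
    ultimately show "\<exists>c'\<in>carrier (dsum I A). g \<otimes>\<^bsub>G\<^esub> iota c \<otimes>\<^bsub>G\<^esub> inv\<^bsub>G\<^esub> g = iota c' \<and> supp_ds I A c' = phi (eps g) ` insert i S"
      using dD cr'(1) by blast
  qed
qed

lemma conj_supp:
  assumes g: "g \<in> carrier G" and c: "c \<in> carrier (dsum I A)"
  obtains c' where "c' \<in> carrier (dsum I A)" "g \<otimes>\<^bsub>G\<^esub> iota c \<otimes>\<^bsub>G\<^esub> inv\<^bsub>G\<^esub> g = iota c'"
    "supp_ds I A c' = phi (eps g) ` supp_ds I A c"
    "card (supp_ds I A c') = card (supp_ds I A c)"
proof -
  obtain c' where c': "c' \<in> carrier (dsum I A)" "g \<otimes>\<^bsub>G\<^esub> iota c \<otimes>\<^bsub>G\<^esub> inv\<^bsub>G\<^esub> g = iota c'"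
    "supp_ds I A c' = phi (eps g) ` supp_ds I A c"
    using conj_supp_aux[OF g supp_fin[OF c]] c by blast
  moreover have "card (supp_ds I A c') = card (supp_ds I A c)"
  proof -
    have "inj_on (phi (eps g)) (supp_ds I A c)" using inj_on_subset[OF phi_inj[of "eps g"] supp_sub] g by simp
    then show ?thesis using c'(3) card_image by simp
  qed
  ultimately show ?thesis using that by blast
qed


lemma main:
  fixes tau :: "'b \<Rightarrow> 'g" and Dc :: real
  assumes tauc: "tau \<in> carrier B \<rightarrow> carrier G" and taus: "\<forall>b\<in>carrier B. eps (tau b) = b"
    and tau1: "tau \<one>\<^bsub>B\<^esub> = \<one>\<^bsub>G\<^esub>"
    and bnd: "\<forall>a\<in>carrier B. \<forall>b\<in>carrier B. \<exists>c\<in>carrier (dsum I A).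
        iota c = tau a \<otimes>\<^bsub>G\<^esub> tau b \<otimes>\<^bsub>G\<^esub> inv\<^bsub>G\<^esub> (tau (a \<otimes>\<^bsub>B\<^esub> b)) \<and> real (card (supp_ds I A c)) \<le> Dc"
  shows "\<exists>q :: 'g \<Rightarrow> 'i \<Rightarrow> real.
           (\<forall>z\<in>carrier G. q z \<in> l2 I) \<and>
           (\<forall>x\<in>carrier G. \<forall>y\<in>carrier G. \<exists>M. \<forall>z\<in>carrier G.
               l2norm I (\<lambda>i. q (x \<otimes>\<^bsub>G\<^esub> z \<otimes>\<^bsub>G\<^esub> y) i - perm_rep B I phi (eps x) (q z) i) \<le> M) \<and>
           (\<forall>c\<in>carrier (dsum I A). (l2norm I (q (iota c)))\<^sup>2 = real (card (supp_ds I A c)))"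
proof -
  have tauG: "\<And>b. b \<in> carrier B \<Longrightarrow> tau b \<in> carrier G" using tauc by auto
  define kk where "kk g = g \<otimes>\<^bsub>G\<^esub> inv\<^bsub>G\<^esub> (tau (eps g))" for g
  have kkG: "eps (kk g) = \<one>\<^bsub>B\<^esub> \<and> kk g \<in> carrier G" if g: "g \<in> carrier G" for g
  proof -
    have egB: "eps g \<in> carrier B" using g by simp
    have "eps (kk g) = eps g \<otimes>\<^bsub>B\<^esub> inv\<^bsub>B\<^esub> (eps (tau (eps g)))"
      unfolding kk_def using g tauG[OF egB] by (simp add: eh.hom_mult eh.hom_inv)
    also have "\<dots> = \<one>\<^bsub>B\<^esub>" using taus egB by simp
    finally show ?thesis unfolding kk_def using g tauG[OF egB] by simp
  qed
  define cf where "cf g = cof (kk g)" for g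
  have cfD: "cf g \<in> carrier (dsum I A) \<and> iota (cf g) = kk g" if "g \<in> carrier G" for g
    unfolding cf_def using kern_elem kkG that by blast
  define q where "q g = (\<lambda>i. if i \<in> supp_ds I A (cf g) then 1 else (0::real))" for g
  show ?thesis
  proof (intro exI[of _ q] conjI ballI)
    fix z assume z: "z \<in> carrier G"
    show "q z \<in> l2 I" unfolding q_def
      using l2_ind(1)[OF supp_fin supp_sub] cfD[OF z] by blast
  next
    fix c assume c: "c \<in> carrier (dsum I A)"
    have ic: "iota c \<in> carrier G" using c by simp
    have "eps (iota c) = \<one>\<^bsub>B\<^esub>" using kern c unfolding kernel_def by auto
    then have "kk (iota c) = iota c" unfolding kk_def using tau1 ic by simp
    then have "cf (iota c) = c" unfolding cf_def using cof_iota[OF c] by simp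
    then have "l2norm I (q (iota c)) = sqrt (real (card (supp_ds I A c)))"
      unfolding q_def using l2_ind(2)[OF supp_fin[OF c] supp_sub] by simp
    then show "(l2norm I (q (iota c)))\<^sup>2 = real (card (supp_ds I A c))" by simp
  next
    fix x y assume x: "x \<in> carrier G" and y: "y \<in> carrier G"
    define M where "M = sqrt (real (card (supp_ds I A (cf x))) + real (card (supp_ds I A (cf y))) + 2 * Dc)"
    show "\<exists>M. \<forall>z\<in>carrier G.
               l2norm I (\<lambda>i. q (x \<otimes>\<^bsub>G\<^esub> z \<otimes>\<^bsub>G\<^esub> y) i - perm_rep B I phi (eps x) (q z) i) \<le> M"
    proof (intro exI[of _ M] ballI)
      fix z assume z: "z \<in> carrier G"
      have exB: "eps x \<in> carrier B" and ezB: "eps z \<in> carrier B" and eyB: "eps y \<in> carrier B"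
        using x y z by auto
      define a where "a = tau (eps x)"
      define b where "b = tau (eps z)"
      define cc where "cc = tau (eps y)"
      define u where "u = tau (eps x \<otimes>\<^bsub>B\<^esub> eps z)"
      define v where "v = tau (eps x \<otimes>\<^bsub>B\<^esub> eps z \<otimes>\<^bsub>B\<^esub> eps y)"
      have aG: "a \<in> carrier G" and bG: "b \<in> carrier G" and cG: "cc \<in> carrier G"
        and uG: "u \<in> carrier G" and vG: "v \<in> carrier G"
        unfolding a_def b_def cc_def u_def v_def using exB ezB eyB tauG by auto
      obtain c3 where c3: "c3 \<in> carrier (dsum I A)" "iota c3 = a \<otimes>\<^bsub>G\<^esub> b \<otimes>\<^bsub>G\<^esub> inv\<^bsub>G\<^esub> u"
        "real (card (supp_ds I A c3)) \<le> Dc"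
        using bnd exB ezB unfolding a_def b_def u_def by blast
      obtain c4 where c4: "c4 \<in> carrier (dsum I A)" "iota c4 = u \<otimes>\<^bsub>G\<^esub> cc \<otimes>\<^bsub>G\<^esub> inv\<^bsub>G\<^esub> v"
        "real (card (supp_ds I A c4)) \<le> Dc"
        using bnd exB ezB eyB unfolding v_def cc_def u_def
        by (metis Bp.m_closed)
      have cfx: "cf x \<in> carrier (dsum I A)" "iota (cf x) = x \<otimes>\<^bsub>G\<^esub> inv\<^bsub>G\<^esub> a"
        using cfD[OF x] unfolding kk_def a_def by auto
      have cfy: "cf y \<in> carrier (dsum I A)" "iota (cf y) = y \<otimes>\<^bsub>G\<^esub> inv\<^bsub>G\<^esub> cc"
        using cfD[OF y] unfolding kk_def cc_def by auto
      have cfz: "cf z \<in> carrier (dsum I A)" "iota (cf z) = z \<otimes>\<^bsub>G\<^esub> inv\<^bsub>G\<^esub> b"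
        using cfD[OF z] unfolding kk_def b_def by auto
      obtain c2 where c2: "c2 \<in> carrier (dsum I A)"
        "(a \<otimes>\<^bsub>G\<^esub> b) \<otimes>\<^bsub>G\<^esub> iota (cf y) \<otimes>\<^bsub>G\<^esub> inv\<^bsub>G\<^esub> (a \<otimes>\<^bsub>G\<^esub> b) = iota c2"
        "card (supp_ds I A c2) = card (supp_ds I A (cf y))"
        using conj_supp[OF Gp.m_closed[OF aG bG] cfy(1)] by metis
      obtain c1 where c1: "c1 \<in> carrier (dsum I A)"
        "x \<otimes>\<^bsub>G\<^esub> iota (cf z) \<otimes>\<^bsub>G\<^esub> inv\<^bsub>G\<^esub> x = iota c1"
        "supp_ds I A c1 = phi (eps x) ` supp_ds I A (cf z)"
        using conj_supp[OF x cfz(1)] by metis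
      define r where "r = cf x \<otimes>\<^bsub>dsum I A\<^esub> c2 \<otimes>\<^bsub>dsum I A\<^esub> c3 \<otimes>\<^bsub>dsum I A\<^esub> c4"
      have rD: "r \<in> carrier (dsum I A)" unfolding r_def using cfx c2 c3 c4 by (simp del: mult_sum_group)
      have xzy: "x \<otimes>\<^bsub>G\<^esub> z \<otimes>\<^bsub>G\<^esub> y \<in> carrier G" using x y z by simp
      have exzy: "eps (x \<otimes>\<^bsub>G\<^esub> z \<otimes>\<^bsub>G\<^esub> y) = eps x \<otimes>\<^bsub>B\<^esub> eps z \<otimes>\<^bsub>B\<^esub> eps y"
        using x y z by (simp add: eh.hom_mult)
      have "iota (c1 \<otimes>\<^bsub>dsum I A\<^esub> r) = iota c1 \<otimes>\<^bsub>G\<^esub> (iota (cf x) \<otimes>\<^bsub>G\<^esub> iota c2 \<otimes>\<^bsub>G\<^esub> iota c3 \<otimes>\<^bsub>G\<^esub> iota c4)"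
        unfolding r_def using c1 cfx c2 c3 c4 by (simp del: mult_sum_group add: ih.hom_mult)
      also have "\<dots> = x \<otimes>\<^bsub>G\<^esub> z \<otimes>\<^bsub>G\<^esub> y \<otimes>\<^bsub>G\<^esub> inv\<^bsub>G\<^esub> v"
        unfolding c1(2)[symmetric] cfz(2) cfx(2) c2(2)[symmetric] cfy(2) c3(2) c4(2)
        by (rule big_identity[OF grpG x z y aG bG cG uG vG])
      also have "\<dots> = kk (x \<otimes>\<^bsub>G\<^esub> z \<otimes>\<^bsub>G\<^esub> y)" unfolding kk_def exzy v_def ..
      finally have "cf (x \<otimes>\<^bsub>G\<^esub> z \<otimes>\<^bsub>G\<^esub> y) = c1 \<otimes>\<^bsub>dsum I A\<^esub> r"
        unfolding cf_def using cof_iota[OF Dp.m_closed[OF c1(1) rD]] by simp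
      then have qxzy: "q (x \<otimes>\<^bsub>G\<^esub> z \<otimes>\<^bsub>G\<^esub> y) = (\<lambda>i. if i \<in> supp_ds I A (c1 \<otimes>\<^bsub>dsum I A\<^esub> r) then 1 else 0)"
        unfolding q_def by simp
      have pz: "perm_rep B I phi (eps x) (q z) = (\<lambda>i. if i \<in> supp_ds I A c1 then 1 else 0)"
        unfolding q_def c1(3) by (rule perm_rep_ind[OF exB supp_sub])
      define S1 where "S1 = supp_ds I A (c1 \<otimes>\<^bsub>dsum I A\<^esub> r)"
      define S2 where "S2 = supp_ds I A c1"
      have "l2norm I (\<lambda>i. q (x \<otimes>\<^bsub>G\<^esub> z \<otimes>\<^bsub>G\<^esub> y) i - perm_rep B I phi (eps x) (q z) i)
           = sqrt (real (card ((S1 - S2) \<union> (S2 - S1))))"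
        unfolding qxzy pz S1_def[symmetric] S2_def[symmetric]
        by (rule l2norm_diff) (use supp_fin supp_sub Dp.m_closed[OF c1(1) rD] c1(1) in \<open>auto simp: S1_def S2_def\<close>)
      also have "\<dots> \<le> sqrt (real (card (supp_ds I A r)))"
      proof -
        have "card ((S1 - S2) \<union> (S2 - S1)) \<le> card (supp_ds I A r)"
          by (rule card_mono[OF supp_fin[OF rD]]) (unfold S1_def S2_def, rule supp_mult2[OF c1(1) rD])
        then show ?thesis by simp
      qed
      also have "\<dots> \<le> M"
      proof -
        have "card (supp_ds I A r) \<le> card (supp_ds I A (cf x)) + card (supp_ds I A c2) + card (supp_ds I A c3) + card (supp_ds I A c4)"
          unfolding r_def using card_supp_mult cfx(1) c2(1) c3(1) c4(1) Dp.m_closed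
          by (smt (verit, ccfv_SIG) add_le_mono1 le_trans)
        then have "real (card (supp_ds I A r)) \<le> real (card (supp_ds I A (cf x))) + real (card (supp_ds I A (cf y))) + 2 * Dc"
          using c2(3) c3(3) c4(3) by linarith
        then show ?thesis unfolding M_def by simp
      qed
      finally show "l2norm I (\<lambda>i. q (x \<otimes>\<^bsub>G\<^esub> z \<otimes>\<^bsub>G\<^esub> y) i - perm_rep B I phi (eps x) (q z) i) \<le> M" .
    qed
  qed
qed

end


theorem theorem5p1:
  fixes G :: "('g, 'gc) monoid_scheme" and A :: "('a, 'ac) monoid_scheme"
    and B :: "('b, 'bc) monoid_scheme" and I :: "'i set"
    and phi :: "'b \<Rightarrow> 'i \<Rightarrow> 'i" and iota :: "('i \<Rightarrow> 'a) \<Rightarrow> 'g" and eps :: "'g \<Rightarrow> 'b"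
    and sig :: "'b \<Rightarrow> 'g" and C :: real
  assumes wr: "WR G A B I phi iota eps"
    and sig_carrier: "sig \<in> carrier B \<rightarrow> carrier G"
    and sig_section: "\<forall>b\<in>carrier B. eps (sig b) = b"
    and C_pos: "C > 0"
    and bounded: "\<forall>x\<in>carrier B. \<forall>y\<in>carrier B. \<exists>c\<in>carrier (dsum I A).
                    iota c = cocycle G B sig x y \<and> real (card (supp_ds I A c)) \<le> C"
  shows "\<exists>q :: 'g \<Rightarrow> 'i \<Rightarrow> real.
           (\<forall>z\<in>carrier G. q z \<in> l2 I) \<and>
           (\<forall>x\<in>carrier G. \<forall>y\<in>carrier G. \<exists>M. \<forall>z\<in>carrier G.
               l2norm I (\<lambda>i. q (x \<otimes>\<^bsub>G\<^esub> z \<otimes>\<^bsub>G\<^esub> y) i - perm_rep B I phi (eps x) (q z) i) \<le> M) \<and>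
           (\<forall>c\<in>carrier (dsum I A). (l2norm I (q (iota c)))\<^sup>2 = real (card (supp_ds I A c)))"
proof -
  interpret W: wrc G A B I phi iota eps by unfold_locales (rule wr)
  define tau where "tau b = (if b = \<one>\<^bsub>B\<^esub> then \<one>\<^bsub>G\<^esub> else sig b)" for b
  have sigG: "\<And>b. b \<in> carrier B \<Longrightarrow> sig b \<in> carrier G" using sig_carrier by auto
  have tauc: "tau \<in> carrier B \<rightarrow> carrier G" unfolding tau_def using sigG by auto
  have tauG: "\<And>b. b \<in> carrier B \<Longrightarrow> tau b \<in> carrier G" using tauc by auto
  have taus: "\<forall>b\<in>carrier B. eps (tau b) = b" unfolding tau_def using sig_section by auto
  have tau1: "tau \<one>\<^bsub>B\<^esub> = \<one>\<^bsub>G\<^esub>" unfolding tau_def by simp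
  have bnd: "\<forall>a\<in>carrier B. \<forall>b\<in>carrier B. \<exists>c\<in>carrier (dsum I A).
        iota c = tau a \<otimes>\<^bsub>G\<^esub> tau b \<otimes>\<^bsub>G\<^esub> inv\<^bsub>G\<^esub> (tau (a \<otimes>\<^bsub>B\<^esub> b)) \<and> real (card (supp_ds I A c)) \<le> 2 * C"
  proof (intro ballI)
    fix a b assume a: "a \<in> carrier B" and b: "b \<in> carrier B"
    have one_ok: "\<exists>c\<in>carrier (dsum I A). iota c = \<one>\<^bsub>G\<^esub> \<and> real (card (supp_ds I A c)) \<le> 2 * C"
    proof (intro bexI[of _ "\<one>\<^bsub>dsum I A\<^esub>"] conjI)
      show "iota \<one>\<^bsub>dsum I A\<^esub> = \<one>\<^bsub>G\<^esub>" by (rule W.ih.hom_one)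
      show "real (card (supp_ds I A \<one>\<^bsub>dsum I A\<^esub>)) \<le> 2 * C" using C_pos unfolding supp_ds_def by simp
    qed (rule W.Dp.one_closed)
    show "\<exists>c\<in>carrier (dsum I A).
        iota c = tau a \<otimes>\<^bsub>G\<^esub> tau b \<otimes>\<^bsub>G\<^esub> inv\<^bsub>G\<^esub> (tau (a \<otimes>\<^bsub>B\<^esub> b)) \<and> real (card (supp_ds I A c)) \<le> 2 * C"
    proof (cases "a = \<one>\<^bsub>B\<^esub> \<or> b = \<one>\<^bsub>B\<^esub>")
      case True
      then have "tau a \<otimes>\<^bsub>G\<^esub> tau b \<otimes>\<^bsub>G\<^esub> inv\<^bsub>G\<^esub> (tau (a \<otimes>\<^bsub>B\<^esub> b)) = \<one>\<^bsub>G\<^esub>"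
        using a b tauG tau1 by auto
      then show ?thesis using one_ok by simp
    next
      case False
      then have an: "a \<noteq> \<one>\<^bsub>B\<^esub>" and bn: "b \<noteq> \<one>\<^bsub>B\<^esub>" by auto
      obtain c1 where c1: "c1 \<in> carrier (dsum I A)" "iota c1 = cocycle G B sig a b"
        "real (card (supp_ds I A c1)) \<le> C" using bounded a b by blast
      show ?thesis
      proof (cases "a \<otimes>\<^bsub>B\<^esub> b = \<one>\<^bsub>B\<^esub>")
        case False
        then have "tau a \<otimes>\<^bsub>G\<^esub> tau b \<otimes>\<^bsub>G\<^esub> inv\<^bsub>G\<^esub> (tau (a \<otimes>\<^bsub>B\<^esub> b)) = cocycle G B sig a b"
          unfolding tau_def cocycle_def using an bn by simp
        then show ?thesis using c1 C_pos by (intro bexI[of _ c1]) auto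
      next
        case True
        obtain c0 where c0: "c0 \<in> carrier (dsum I A)" "iota c0 = cocycle G B sig \<one>\<^bsub>B\<^esub> \<one>\<^bsub>B\<^esub>"
          "real (card (supp_ds I A c0)) \<le> C" using bounded by blast
        have s1: "sig \<one>\<^bsub>B\<^esub> \<in> carrier G" using sigG by simp
        have "cocycle G B sig \<one>\<^bsub>B\<^esub> \<one>\<^bsub>B\<^esub> = sig \<one>\<^bsub>B\<^esub>"
          unfolding cocycle_def using s1 by (simp add: W.Gp.m_assoc)
        then have e0: "iota c0 = sig \<one>\<^bsub>B\<^esub>" using c0 by simp
        have "tau a \<otimes>\<^bsub>G\<^esub> tau b \<otimes>\<^bsub>G\<^esub> inv\<^bsub>G\<^esub> (tau (a \<otimes>\<^bsub>B\<^esub> b)) = sig a \<otimes>\<^bsub>G\<^esub> sig b"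
          unfolding tau_def using an bn True a b sigG by simp
        also have "\<dots> = cocycle G B sig a b \<otimes>\<^bsub>G\<^esub> sig \<one>\<^bsub>B\<^esub>"
          unfolding cocycle_def True using a b sigG s1 by (simp add: W.Gp.m_assoc)
        also have "\<dots> = iota (c1 \<otimes>\<^bsub>dsum I A\<^esub> c0)"
          using c1 c0 e0 by (simp del: mult_sum_group add: W.ih.hom_mult)
        finally have e: "tau a \<otimes>\<^bsub>G\<^esub> tau b \<otimes>\<^bsub>G\<^esub> inv\<^bsub>G\<^esub> (tau (a \<otimes>\<^bsub>B\<^esub> b)) = iota (c1 \<otimes>\<^bsub>dsum I A\<^esub> c0)" .
        have "card (supp_ds I A (c1 \<otimes>\<^bsub>dsum I A\<^esub> c0)) \<le> card (supp_ds I A c1) + card (supp_ds I A c0)"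
          by (rule W.card_supp_mult[OF c1(1) c0(1)])
        then have "real (card (supp_ds I A (c1 \<otimes>\<^bsub>dsum I A\<^esub> c0))) \<le> 2 * C"
          using c1(3) c0(3) by linarith
        then show ?thesis using e W.Dp.m_closed[OF c1(1) c0(1)] by metis
      qed
    qed
  qed
  show ?thesis by (rule W.main[OF tauc taus tau1 bnd])
qed

end
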